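(* Consider the following setting. Let $P\subseteq\mathbb{R}^n$ be a closed convex set, $c:\mathbb{R}^n\to\mathbb{R}$, $A\in\mathbb{R}^{I\times n}$ with rows $A_{i\bullet}$, $\eta\in\mathbb{R}^I$, scalars $\psi_{ij}$ ($i=0,\dots,I$, $j=1,\dots,J_i$) with $\psi_{ij}^\pm=\max(\pm\psi_{ij},0)$, and for each $(i,j)$ $$\phi_{ij}(x) = \max_{1\le k\le K_{ij}}\big[(a_{ij}^k)^\top x + \alpha_{ij}^k\big] + \min_{1\le \ell\le L_{ij}}\big[(b_{ij}^\ell)^\top x + \beta_{ij}^\ell\big].$$ Define $\theta$, $X_{\rm AHS}$, $\theta^\varepsilon$, $X^\varepsilon_{\rm AHS}$ as in the context. Let $\bar x\in X_{\rm AHS}$, and let $\bar\varepsilon>0$ and a neighborhood $\mathcal{N}$ of $\bar x$ be such that for all $i=0,1,\dots,I$, all $j\notin \mathcal{J}^-_{i,0}(\bar x)$, all $\varepsilon\in(0,\bar\varepsilon]$ and all $x\in\mathcal{N}$, $$\psi_{ij}^-\,\mathbf{1}_{(-\varepsilon,\infty)}(\phi_{ij}(x)) = \psi_{ij}^-\,\mathbf{1}_{[0,\infty)}(\phi_{ij}(x)) = \psi_{ij}^-\,\mathbf{1}_{[0,\infty)}(\phi_{ij}(\bar x)).$$ Then: (A) If $\bar x$ is a local maximizer of $\theta$ on $X_{\rm AHS}$, then $\bar x$ is a local maximizer of $\theta^\varepsilon$ on $X^\varepsilon_{\rm AHS}$ for every $\varepsilon\in(0,\bar\varepsilon]$. (B)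 Conversely, if for some $\varepsilon\in(0,\bar\varepsilon]$ the point $\bar x$ is a local maximizer of $\theta^\varepsilon$ on $X^\varepsilon_{\rm AHS}$ and $\bar x$ satisfies the local sign-invariance condition, then $\bar x$ is a local maximizer of $\theta$ on $X_{\rm AHS}$.
   Context: $\mathbf{1}_S$ is the indicator of $S\subseteq\mathbb{R}$. $\theta(x)=c(x)+\sum_{j=1}^{J_0}\psi_{0j}\mathbf{1}_{[0,\infty)}(\phi_{0j}(x))$ and $X_{\rm AHS}=\{x\in P: A_{i\bullet}x+\sum_{j=1}^{J_i}\psi_{ij}\mathbf{1}_{[0,\infty)}(\phi_{ij}(x))\ge\eta_i,\ i=1,\dots,I\}$ (the problem of maximizing $\theta$ over $X_{\rm AHS}$ is the A-HSCOP). For $\varepsilon>0$: $\theta^\varepsilon(x)=c(x)+\sum_{j=1}^{J_0}\psi_{0j}^+\mathbf{1}_{[0,\infty)}(\phi_{0j}(x))-\sum_{j=1}^{J_0}\psi_{0j}^-\mathbf{1}_{(-\varepsilon,\infty)}(\phi_{0j}(x))$ and $X^\varepsilon_{\rm AHS}=\{x\in P: A_{i\bullet}x+\sum_{j}\psi_{ij}^+\mathbf{1}_{[0,\infty)}(\phi_{ij}(x))-\sum_j\psi_{ij}^-\mathbf{1}_{(-\varepsilon,\infty)}(\phi_{ij}(x))\ge\eta_i,\ i=1,\dots,I\}$. A local maximizer of a function $f$ on a set $X$ is a point $\bar x\in X$ for which there is a neighborhood $\mathcal{N}$ of $\bar x$ with $f(\bar x)\ge f(x)$ for all $x\in X\cap\mathcal{N}$.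 For $i=0,\dots,I$, $\mathcal{J}^-_{i,0}(\bar x)=\{j\in\{1,\dots,J_i\}:\psi_{ij}<0,\ \phi_{ij}(\bar x)=0\}$. The point $\bar x$ satisfies the local sign-invariance (LSI) condition if for every $i=0,1,\dots,I$ and every $j\in\mathcal{J}^-_{i,0}(\bar x)$, $\phi_{ij}$ is nonnegative on some neighborhood of $\bar x$. *)

theory Defs
  imports "HOL-Analysis.Analysis"
begin

definition pospart :: "real \<Rightarrow> real" where "pospart t = max t 0"
definition negpart :: "real \<Rightarrow> real" where "negpart t = max (- t) 0"

definition pwl_phi ::
  "(nat \<Rightarrow> nat \<Rightarrow> nat \<Rightarrow> real^'n) \<Rightarrow> (nat \<Rightarrow> nat \<Rightarrow> nat \<Rightarrow> real) \<Rightarrow> (nat \<Rightarrow> nat \<Rightarrow> nat) \<Rightarrow>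
   (nat \<Rightarrow> nat \<Rightarrow> nat \<Rightarrow> real^'n) \<Rightarrow> (nat \<Rightarrow> nat \<Rightarrow> nat \<Rightarrow> real) \<Rightarrow> (nat \<Rightarrow> nat \<Rightarrow> nat) \<Rightarrow>
   nat \<Rightarrow> nat \<Rightarrow> real^'n \<Rightarrow> real" where
  "pwl_phi a alpha K b beta L i j x =
     Max ((\<lambda>k. a i j k \<bullet> x + alpha i j k) ` {1..K i j})
   + Min ((\<lambda>l. b i j l \<bullet> x + beta i j l) ` {1..L i j})"

definition theta ::
  "(real^'n \<Rightarrow> real) \<Rightarrow> (nat \<Rightarrow> nat \<Rightarrow> real) \<Rightarrow> (nat \<Rightarrow> nat) \<Rightarrow> (nat \<Rightarrow> nat \<Rightarrow> real^'n \<Rightarrow> real)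
   \<Rightarrow> real^'n \<Rightarrow> real" where
  "theta c psi J ph x = c x + (\<Sum>j = 1..J 0. psi 0 j * indicator {0..} (ph 0 j x))"

definition X_AHS ::
  "(real^'n) set \<Rightarrow> (nat \<Rightarrow> real^'n) \<Rightarrow> (nat \<Rightarrow> real) \<Rightarrow> nat \<Rightarrow> (nat \<Rightarrow> nat \<Rightarrow> real) \<Rightarrow> (nat \<Rightarrow> nat)
   \<Rightarrow> (nat \<Rightarrow> nat \<Rightarrow> real^'n \<Rightarrow> real) \<Rightarrow> (real^'n) set" where
  "X_AHS P A eta I psi J ph =
     {x \<in> P. \<forall>i \<in> {1..I}.
        A i \<bullet> x + (\<Sum>j = 1..J i. psi i j * indicator {0..} (ph i j x)) \<ge> eta i}"

definition theta_eps ::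
  "real \<Rightarrow> (real^'n \<Rightarrow> real) \<Rightarrow> (nat \<Rightarrow> nat \<Rightarrow> real) \<Rightarrow> (nat \<Rightarrow> nat) \<Rightarrow> (nat \<Rightarrow> nat \<Rightarrow> real^'n \<Rightarrow> real)
   \<Rightarrow> real^'n \<Rightarrow> real" where
  "theta_eps eps c psi J ph x = c x
     + (\<Sum>j = 1..J 0. pospart (psi 0 j) * indicator {0..} (ph 0 j x))
     - (\<Sum>j = 1..J 0. negpart (psi 0 j) * indicator {-eps<..} (ph 0 j x))"

definition X_AHS_eps ::
  "real \<Rightarrow> (real^'n) set \<Rightarrow> (nat \<Rightarrow> real^'n) \<Rightarrow> (nat \<Rightarrow> real) \<Rightarrow> nat \<Rightarrow> (nat \<Rightarrow> nat \<Rightarrow> real)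
   \<Rightarrow> (nat \<Rightarrow> nat) \<Rightarrow> (nat \<Rightarrow> nat \<Rightarrow> real^'n \<Rightarrow> real) \<Rightarrow> (real^'n) set" where
  "X_AHS_eps eps P A eta I psi J ph =
     {x \<in> P. \<forall>i \<in> {1..I}.
        A i \<bullet> x + (\<Sum>j = 1..J i. pospart (psi i j) * indicator {0..} (ph i j x))
                 - (\<Sum>j = 1..J i. negpart (psi i j) * indicator {-eps<..} (ph i j x)) \<ge> eta i}"

definition local_maximizer :: "('a::topological_space \<Rightarrow> real) \<Rightarrow> 'a set \<Rightarrow> 'a \<Rightarrow> bool" where
  "local_maximizer f X xb \<longleftrightarrow> xb \<in> X \<and> (\<exists>N. open N \<and> xb \<in> N \<and> (\<forall>x \<in> X \<inter> N. f xb \<ge> f x))"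

definition Jminus0 ::
  "(nat \<Rightarrow> nat \<Rightarrow> real) \<Rightarrow> (nat \<Rightarrow> nat) \<Rightarrow> (nat \<Rightarrow> nat \<Rightarrow> 'a \<Rightarrow> real) \<Rightarrow> nat \<Rightarrow> 'a \<Rightarrow> nat set" where
  "Jminus0 psi J ph i xb = {j \<in> {1..J i}. psi i j < 0 \<and> ph i j xb = 0}"

definition LSI ::
  "nat \<Rightarrow> (nat \<Rightarrow> nat \<Rightarrow> real) \<Rightarrow> (nat \<Rightarrow> nat) \<Rightarrow> (nat \<Rightarrow> nat \<Rightarrow> 'a::topological_space \<Rightarrow> real) \<Rightarrow> 'a \<Rightarrow> bool" where
  "LSI I psi J ph xb \<longleftrightarrow>
     (\<forall>i \<in> {0..I}. \<forall>j \<in> Jminus0 psi J ph i xb.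
        \<exists>N. open N \<and> xb \<in> N \<and> (\<forall>x \<in> N. ph i j x \<ge> 0))"

end

theory Submission
  imports Defs
begin

lemma pn_split: "psi * (t::real) = pospart psi * t - negpart psi * t"
  by (simp add: pospart_def negpart_def max_def algebra_simps)

lemma negpart_nn: "negpart t \<ge> 0" by (simp add: negpart_def)

lemma ind_le: "negpart p * indicator {0..} (y::real) \<le> negpart p * indicator {-eps<..} y"
  if "eps > 0" for eps :: real
  using that negpart_nn[of p] by (auto simp: indicator_def)

lemma sum_psi: "(\<Sum>j = 1..n. psi j * indicator {0..} (f j :: real)) =
   (\<Sum>j = 1..n. pospart (psi j) * indicator {0..} (f j)) - (\<Sum>j = 1..n. negpart (psi j) * indicator {0..} (f j))"
  by (subst sum_subtractf[symmetric]) (rule sum.cong, auto intro: pn_split)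

lemma sum_le_eps: "eps > 0 \<Longrightarrow> (\<Sum>j = 1..n. negpart (psi j) * indicator {0..} (f j :: real)) \<le>
    (\<Sum>j = 1..n. negpart (psi j) * indicator {-eps<..} (f j))"
  by (rule sum_mono) (rule ind_le)

lemma theta_le: "eps > 0 \<Longrightarrow> theta_eps eps c psi J ph x \<le> theta c psi J ph x"
proof -
  assume e: "eps > 0"
  have 1: "(\<Sum>j = 1..J 0. psi 0 j * indicator {0..} (ph 0 j x)) =
   (\<Sum>j = 1..J 0. pospart (psi 0 j) * indicator {0..} (ph 0 j x)) - (\<Sum>j = 1..J 0. negpart (psi 0 j) * indicator {0..} (ph 0 j x))"
    by (rule sum_psi)
  have 2: "(\<Sum>j = 1..J 0. negpart (psi 0 j) * indicator {0..} (ph 0 j x)) \<le>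
    (\<Sum>j = 1..J 0. negpart (psi 0 j) * indicator {-eps<..} (ph 0 j x))"
    by (rule sum_le_eps[OF e])
  show ?thesis unfolding theta_eps_def theta_def 1 using 2 by linarith
qed

lemma X_sub: "eps > 0 \<Longrightarrow> X_AHS_eps eps P A eta I psi J ph \<subseteq> X_AHS P A eta I psi J ph"
proof
  fix x assume e: "eps > 0" and x: "x \<in> X_AHS_eps eps P A eta I psi J ph"
  have xP: "x \<in> P" using x by (simp add: X_AHS_eps_def)
  have "eta i \<le> A i \<bullet> x + (\<Sum>j = 1..J i. psi i j * indicator {0..} (ph i j x))" if i: "i \<in> {1..I}" for i
  proof -
    have 1: "(\<Sum>j = 1..J i. psi i j * indicator {0..} (ph i j x)) =
     (\<Sum>j = 1..J i. pospart (psi i j) * indicator {0..} (ph i j x)) - (\<Sum>j = 1..J i. negpart (psi i j) * indicator {0..} (ph i j x))"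
      by (rule sum_psi)
    have 2: "(\<Sum>j = 1..J i. negpart (psi i j) * indicator {0..} (ph i j x)) \<le>
      (\<Sum>j = 1..J i. negpart (psi i j) * indicator {-eps<..} (ph i j x))"
      by (rule sum_le_eps[OF e])
    have 3: "A i \<bullet> x + (\<Sum>j = 1..J i. pospart (psi i j) * indicator {0..} (ph i j x))
                 - (\<Sum>j = 1..J i. negpart (psi i j) * indicator {-eps<..} (ph i j x)) \<ge> eta i"
      using x i unfolding X_AHS_eps_def by blast
    show ?thesis using 1 2 3 by linarith
  qed
  then show "x \<in> X_AHS P A eta I psi J ph" using xP unfolding X_AHS_def by blast
qed

lemma agree:
  assumes "\<forall>i\<in>{0..I}. \<forall>j\<in>{1..J i}. negpart (psi i j) * indicator {-eps<..} (ph i j x)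
             = negpart (psi i j) * indicator {0..} (ph i j x)"
  shows "theta_eps eps c psi J ph x = theta c psi J ph x"
    and "x \<in> X_AHS_eps eps P A eta I psi J ph \<longleftrightarrow> x \<in> X_AHS P A eta I psi J ph"
proof -
  have s: "(\<Sum>j = 1..J i. negpart (psi i j) * indicator {-eps<..} (ph i j x)) =
           (\<Sum>j = 1..J i. negpart (psi i j) * indicator {0..} (ph i j x))" if "i \<in> {0..I}" for i
    using assms that by (intro sum.cong) auto
  have 1: "(\<Sum>j = 1..J i. psi i j * indicator {0..} (ph i j x)) =
     (\<Sum>j = 1..J i. pospart (psi i j) * indicator {0..} (ph i j x)) - (\<Sum>j = 1..J i. negpart (psi i j) * indicator {0..} (ph i j x))" for i
    by (rule sum_psi)
  have t: "A i \<bullet> x + (\<Sum>j = 1..J i. pospart (psi i j) * indicator {0..} (ph i j x))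
                 - (\<Sum>j = 1..J i. negpart (psi i j) * indicator {-eps<..} (ph i j x)) =
           A i \<bullet> x + (\<Sum>j = 1..J i. psi i j * indicator {0..} (ph i j x))" if "i \<in> {1..I}" for i
    using s[of i] 1[of i] that by simp
  show "theta_eps eps c psi J ph x = theta c psi J ph x"
    unfolding theta_eps_def theta_def using s[of 0] 1[of 0] by simp
  show "x \<in> X_AHS_eps eps P A eta I psi J ph \<longleftrightarrow> x \<in> X_AHS P A eta I psi J ph"
    unfolding X_AHS_eps_def X_AHS_def using t by (simp only: mem_Collect_eq) (metis (no_types, lifting))
qed

lemma gen:
  fixes ph :: "nat \<Rightarrow> nat \<Rightarrow> real^'n::finite \<Rightarrow> real"
  assumes xb: "xb \<in> X_AHS P A eta I psi J ph"
    and N: "open N" "xb \<in> N"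
    and H: "\<forall>i \<in> {0..I}. \<forall>j \<in> {1..J i} - Jminus0 psi J ph i xb.
              \<forall>eps \<in> {0<..epsb}. \<forall>x \<in> N.
                negpart (psi i j) * indicator {-eps<..} (ph i j x)
                  = negpart (psi i j) * indicator {0..} (ph i j x)
              \<and> negpart (psi i j) * indicator {0..} (ph i j x)
                  = negpart (psi i j) * indicator {0..} (ph i j xb)"
  shows "(local_maximizer (theta c psi J ph) (X_AHS P A eta I psi J ph) xb
          \<longrightarrow> (\<forall>eps \<in> {0<..epsb}.
                local_maximizer (theta_eps eps c psi J ph) (X_AHS_eps eps P A eta I psi J ph) xb))
       \<and> (\<forall>eps \<in> {0<..epsb}.
            local_maximizer (theta_eps eps c psi J ph) (X_AHS_eps eps P A eta I psi J ph) xb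
            \<and> LSI I psi J ph xb
            \<longrightarrow> local_maximizer (theta c psi J ph) (X_AHS P A eta I psi J ph) xb)"
proof -
  have agxb: "\<forall>i\<in>{0..I}. \<forall>j\<in>{1..J i}. negpart (psi i j) * indicator {-eps<..} (ph i j xb)
             = negpart (psi i j) * indicator {0..} (ph i j xb)" if e: "eps \<in> {0<..epsb}" for eps
  proof (intro ballI)
    fix i j assume i: "i \<in> {0..I}" and j: "j \<in> {1..J i}"
    show "negpart (psi i j) * indicator {-eps<..} (ph i j xb)
             = negpart (psi i j) * indicator {0..} (ph i j xb)"
    proof (cases "j \<in> Jminus0 psi J ph i xb")
      case True
      then have "ph i j xb = 0" by (simp add: Jminus0_def)
      then show ?thesis using e by (simp add: indicator_def)
    next
      case False
      then show ?thesis using H i j e N(2) by blast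
    qed
  qed
  have A: "local_maximizer (theta_eps eps c psi J ph) (X_AHS_eps eps P A eta I psi J ph) xb"
    if lm: "local_maximizer (theta c psi J ph) (X_AHS P A eta I psi J ph) xb"
      and e: "eps \<in> {0<..epsb}" for eps
  proof -
    from lm obtain N1 where N1: "open N1" "xb \<in> N1"
      "\<forall>x \<in> X_AHS P A eta I psi J ph \<inter> N1. theta c psi J ph xb \<ge> theta c psi J ph x"
      by (auto simp: local_maximizer_def)
    note ag = agree(1)[where I=I and J=J and psi=psi and eps=eps and ph=ph and x=xb and c=c, OF agxb[OF e]] agree(2)[where I=I and J=J and psi=psi and eps=eps and ph=ph and x=xb and P=P and A=A and eta=eta, OF agxb[OF e]]
    have e0: "eps > 0" using e by simp
    show ?thesis unfolding local_maximizer_def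
    proof (intro conjI exI[of _ N1])
      show "xb \<in> X_AHS_eps eps P A eta I psi J ph" using ag(2) xb by simp
      show "\<forall>x\<in>X_AHS_eps eps P A eta I psi J ph \<inter> N1.
          theta_eps eps c psi J ph x \<le> theta_eps eps c psi J ph xb"
        proof
        fix x assume x: "x \<in> X_AHS_eps eps P A eta I psi J ph \<inter> N1"
        then have "x \<in> X_AHS P A eta I psi J ph \<inter> N1" using X_sub[OF e0, of P A eta I psi J ph] by blast
        then have "theta c psi J ph x \<le> theta c psi J ph xb" using N1(3) by blast
        then show "theta_eps eps c psi J ph x \<le> theta_eps eps c psi J ph xb"
          using theta_le[OF e0, of c psi J ph x] ag(1) by linarith
      qed
    qed (use N1 in auto)
  qed
  have B: "local_maximizer (theta c psi J ph) (X_AHS P A eta I psi J ph) xb"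
    if lm: "local_maximizer (theta_eps eps c psi J ph) (X_AHS_eps eps P A eta I psi J ph) xb"
      and lsi: "LSI I psi J ph xb" and e: "eps \<in> {0<..epsb}" for eps
  proof -
    from lm obtain N2 where N2: "open N2" "xb \<in> N2"
      "\<forall>x \<in> X_AHS_eps eps P A eta I psi J ph \<inter> N2. theta_eps eps c psi J ph xb \<ge> theta_eps eps c psi J ph x"
      by (auto simp: local_maximizer_def)
    define S where "S = Sigma {0..I} (\<lambda>i. Jminus0 psi J ph i xb)"
    have fS: "finite S" unfolding S_def Jminus0_def by auto
    have "\<forall>ij \<in> S. \<exists>M. open M \<and> xb \<in> M \<and> (\<forall>x \<in> M. ph (fst ij) (snd ij) x \<ge> 0)"
      using lsi unfolding LSI_def S_def by auto
    then obtain Nf where Nf: "\<And>ij. ij \<in> S \<Longrightarrow> open (Nf ij) \<and> xb \<in> Nf ij \<and> (\<forall>x \<in> Nf ij. ph (fst ij) (snd ij) x \<ge> 0)"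
      by metis
    define M where "M = N \<inter> N2 \<inter> (\<Inter>ij\<in>S. Nf ij)"
    have oM: "open M" unfolding M_def using fS Nf N N2 by (intro open_Int open_INT) auto
    have xM: "xb \<in> M" unfolding M_def using Nf N N2 by auto
    have agM: "\<forall>i\<in>{0..I}. \<forall>j\<in>{1..J i}. negpart (psi i j) * indicator {-eps<..} (ph i j x)
             = negpart (psi i j) * indicator {0..} (ph i j x)" if x: "x \<in> M" for x
    proof (intro ballI)
      fix i j assume i: "i \<in> {0..I}" and j: "j \<in> {1..J i}"
      show "negpart (psi i j) * indicator {-eps<..} (ph i j x)
             = negpart (psi i j) * indicator {0..} (ph i j x)"
      proof (cases "j \<in> Jminus0 psi J ph i xb")
        case True
        then have "(i,j) \<in> S" using i by (simp add: S_def)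
        then have "ph i j x \<ge> 0" using Nf[of "(i,j)"] x unfolding M_def by auto
        then show ?thesis using e by (simp add: indicator_def)
      next
        case False
        then show ?thesis using H i j e x unfolding M_def by blast
      qed
    qed
    show ?thesis unfolding local_maximizer_def
    proof (intro conjI exI[of _ M])
      show "\<forall>x\<in>X_AHS P A eta I psi J ph \<inter> M. theta c psi J ph x \<le> theta c psi J ph xb"
      proof
        fix x assume x: "x \<in> X_AHS P A eta I psi J ph \<inter> M"
        note ag = agree(1)[where I=I and J=J and psi=psi and eps=eps and ph=ph and x=x and c=c, OF agM] agree(2)[where I=I and J=J and psi=psi and eps=eps and ph=ph and x=x and P=P and A=A and eta=eta, OF agM]
        have xM': "x \<in> M" using x by blast
        have "x \<in> X_AHS_eps eps P A eta I psi J ph \<inter> N2" using x ag(2)[OF xM'] unfolding M_def by auto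
        then have "theta_eps eps c psi J ph x \<le> theta_eps eps c psi J ph xb" using N2(3) by blast
        then show "theta c psi J ph x \<le> theta c psi J ph xb"
          using ag(1)[OF xM'] agree(1)[where I=I and J=J and psi=psi and eps=eps and ph=ph and x=xb and c=c, OF agM[OF xM]] x by auto
      qed
    qed (use xb oM xM in auto)
  qed
  show ?thesis
  proof (intro conjI impI ballI)
    fix eps assume "local_maximizer (theta c psi J ph) (X_AHS P A eta I psi J ph) xb" "eps \<in> {0<..epsb}"
    then show "local_maximizer (theta_eps eps c psi J ph) (X_AHS_eps eps P A eta I psi J ph) xb" by (rule A)
  next
    fix eps assume "eps \<in> {0<..epsb}" and h: "local_maximizer (theta_eps eps c psi J ph) (X_AHS_eps eps P A eta I psi J ph) xb \<and> LSI I psi J ph xb"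
    then show "local_maximizer (theta c psi J ph) (X_AHS P A eta I psi J ph) xb"
      using B[of eps] by blast
  qed
qed

theorem proposition3:
  fixes P :: "(real^'n::finite) set" and c :: "real^'n \<Rightarrow> real"
    and I :: nat and A :: "nat \<Rightarrow> real^'n" and eta :: "nat \<Rightarrow> real"
    and J :: "nat \<Rightarrow> nat" and psi :: "nat \<Rightarrow> nat \<Rightarrow> real"
    and K L :: "nat \<Rightarrow> nat \<Rightarrow> nat"
    and a b :: "nat \<Rightarrow> nat \<Rightarrow> nat \<Rightarrow> real^'n" and alpha beta :: "nat \<Rightarrow> nat \<Rightarrow> nat \<Rightarrow> real"
    and xb :: "real^'n" and epsb :: real and N :: "(real^'n) set"
  assumes P: "closed P" "convex P"
    and KL: "\<forall>i \<in> {0..I}. \<forall>j \<in> {1..J i}. K i j \<ge> 1 \<and> L i j \<ge> 1"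
    and xb: "xb \<in> X_AHS P A eta I psi J (pwl_phi a alpha K b beta L)"
    and epsb: "epsb > 0"
    and N: "open N" "xb \<in> N"
    and H: "\<forall>i \<in> {0..I}. \<forall>j \<in> {1..J i} - Jminus0 psi J (pwl_phi a alpha K b beta L) i xb.
              \<forall>eps \<in> {0<..epsb}. \<forall>x \<in> N.
                negpart (psi i j) * indicator {-eps<..} (pwl_phi a alpha K b beta L i j x)
                  = negpart (psi i j) * indicator {0..} (pwl_phi a alpha K b beta L i j x)
              \<and> negpart (psi i j) * indicator {0..} (pwl_phi a alpha K b beta L i j x)
                  = negpart (psi i j) * indicator {0..} (pwl_phi a alpha K b beta L i j xb)"
  shows "(local_maximizer (theta c psi J (pwl_phi a alpha K b beta L))
             (X_AHS P A eta I psi J (pwl_phi a alpha K b beta L)) xb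
          \<longrightarrow> (\<forall>eps \<in> {0<..epsb}.
                local_maximizer (theta_eps eps c psi J (pwl_phi a alpha K b beta L))
                  (X_AHS_eps eps P A eta I psi J (pwl_phi a alpha K b beta L)) xb))
       \<and> (\<forall>eps \<in> {0<..epsb}.
            local_maximizer (theta_eps eps c psi J (pwl_phi a alpha K b beta L))
              (X_AHS_eps eps P A eta I psi J (pwl_phi a alpha K b beta L)) xb
            \<and> LSI I psi J (pwl_phi a alpha K b beta L) xb
            \<longrightarrow> local_maximizer (theta c psi J (pwl_phi a alpha K b beta L))
                  (X_AHS P A eta I psi J (pwl_phi a alpha K b beta L)) xb)"
  by (rule gen[OF xb N H])

end
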